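(* Consider the time-varying Friedkin--Johnsen (TVFJ) dynamics described in the context, and let $t_0<t_d$ be integers. Fix $\epsilon>0$ and $w>0$. If the temporal graph $\mathcal{G}_{t_0}^{t_d}$ is a defected temporal graph (DTG) with stubbornness parameter $\epsilon$ and edge threshold $w$, then \[ \|\Phi(t_d,t_0)\| \le 1-\epsilon\, w^{\delta}, \qquad \delta := t_d-t_0 . \]
   Context: There are $n$ agents $\mathcal V=\{\mathrm v_1,\dots,\mathrm v_n\}$ with opinions $\mathbf x[t]\in\mathbb R^n$ and a fixed innate opinion vector $\mathbf s\in[0,1]^n$, evolving by the TVFJ model $\mathbf x[t+1]=\Lambda[t]W[t]\mathbf x[t]+(I-\Lambda[t])\mathbf s$, where $W[t]\in\mathbb R^{n\times n}$ is row-stochastic (nonnegative entries, each row summing to 1) and $\Lambda[t]=\mathrm{diag}(\lambda_1[t],\dots,\lambda_n[t])$ with $\lambda_i[t]\in[0,1]$. Standing assumptions: (i) $\lambda_i[t]=0$ if and only if $w_{ij}[t]=0$ for all $j$; (ii) there is no time $\tau$ with $\Lambda[\tau]=0$. The state transition matrix is $\Phi(t,\tau)=\Lambda[t-1]W[t-1]\cdots\Lambda[\tau]W[\tau]$ for $t>\tau$ and $\Phi(\tau,\tau)=I$. The matrix norm is $\|A\|:=\max_i\sum_j|a_{ij}|$. Graphs: at time $t$, $\mathcal G[t]=(\mathcal V,\mathcal E[t])$ has directed edge $(\mathrm v_j,\mathrm v_i)\in\mathcal E[t]$ iff $w_{ij}[t]>0$. The temporal graph on $[t_1,t_2]$ is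 the sequence of layers $\mathcal G_{t_1}^{t_2}=\{\mathcal G[k]\}_{k=t_1}^{t_2}$. A triple $(\mathrm v_j,\mathrm v_i,t)$ is a temporal edge if $(\mathrm v_j,\mathrm v_i)\in\mathcal E[t]$, and a $w$-edge if moreover $w_{ij}[t]\ge w$. A temporal path from $\mathrm v_j$ to $\mathrm v_i$ over $[t_{k_0},t_{k_m}]$ is a sequence of temporal edges $(\mathrm v_j,\mathrm v_{i_1},t_{k_0}),(\mathrm v_{i_1},\mathrm v_{i_2},t_{k_1}),\dots,(\mathrm v_{i_m},\mathrm v_i,t_{k_m})$ across successive time steps. Agent $\mathrm v_i$ is stubborn at time $t$ if $\lambda_i[t]<1$, and $\epsilon$-stubborn (strictly stubborn) if $\lambda_i[t]\le 1-\epsilon$. A temporal path is an influential path if its starting agent is $\epsilon$-stubborn and all its edges are $w$-edges. The temporal graph $\mathcal G_{t_0}^{t_d}$ is a defected temporal graph (DTG) if there exists $k\in[t_0,t_d)$ such that, in layer $\mathcal G[k]$, every agent is either $\epsilon$-stubborn or connected to an $\epsilon$-stubborn agent via a finite influential path entirely contained in $[t_0,t_d)$. *)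

theory Defs
  imports "HOL-Analysis.Analysis"
begin

text \<open>Agents are the elements of a finite type 'n; time is int.
  W t is the row-stochastic influence matrix W[t], lam t the vector
  (lambda_1[t],...,lambda_n[t]) so that Lambda[t] = diag_mat (lam t).\<close>

definition diag_mat :: "real^'n \<Rightarrow> real^'n^'n" where
  "diag_mat v = (\<chi> i j. if i = j then v $ i else 0)"

definition row_stochastic :: "real^'n^'n \<Rightarrow> bool" where
  "row_stochastic A \<longleftrightarrow> (\<forall>i j. 0 \<le> A $ i $ j) \<and> (\<forall>i. (\<Sum>j\<in>UNIV. A $ i $ j) = 1)"

definition tvfj_standing :: "(int \<Rightarrow> real^'n^'n) \<Rightarrow> (int \<Rightarrow> real^'n) \<Rightarrow> bool" where
  "tvfj_standing W lam \<longleftrightarrow>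
     (\<forall>t. row_stochastic (W t)) \<and>
     (\<forall>t i. 0 \<le> lam t $ i \<and> lam t $ i \<le> 1) \<and>
     (\<forall>t i. lam t $ i = 0 \<longleftrightarrow> (\<forall>j. W t $ i $ j = 0)) \<and>
     \<not> (\<exists>\<tau>. diag_mat (lam \<tau>) = 0)"

fun Phi_steps :: "(int \<Rightarrow> real^'n^'n) \<Rightarrow> (int \<Rightarrow> real^'n) \<Rightarrow> int \<Rightarrow> nat \<Rightarrow> real^'n^'n" where
  "Phi_steps W lam \<tau> 0 = mat 1"
| "Phi_steps W lam \<tau> (Suc k) =
     (diag_mat (lam (\<tau> + int k)) ** W (\<tau> + int k)) ** Phi_steps W lam \<tau> k"

text \<open>State transition matrix Phi(t,tau) (meaningful for t >= tau).\<close>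
definition Phi :: "(int \<Rightarrow> real^'n^'n) \<Rightarrow> (int \<Rightarrow> real^'n) \<Rightarrow> int \<Rightarrow> int \<Rightarrow> real^'n^'n" where
  "Phi W lam t \<tau> = Phi_steps W lam \<tau> (nat (t - \<tau>))"

definition mat_norm :: "real^'n^'n \<Rightarrow> real" where
  "mat_norm A = Max (range (\<lambda>i. \<Sum>j\<in>UNIV. \<bar>A $ i $ j\<bar>))"

definition temporal_edge :: "(int \<Rightarrow> real^'n^'n) \<Rightarrow> 'n \<Rightarrow> 'n \<Rightarrow> int \<Rightarrow> bool" where
  "temporal_edge W j i t \<longleftrightarrow> W t $ i $ j > 0"

definition w_edge :: "(int \<Rightarrow> real^'n^'n) \<Rightarrow> real \<Rightarrow> 'n \<Rightarrow> 'n \<Rightarrow> int \<Rightarrow> bool" where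
  "w_edge W w j i t \<longleftrightarrow> temporal_edge W j i t \<and> W t $ i $ j \<ge> w"

definition eps_stubborn :: "(int \<Rightarrow> real^'n) \<Rightarrow> real \<Rightarrow> 'n \<Rightarrow> int \<Rightarrow> bool" where
  "eps_stubborn lam eps i t \<longleftrightarrow> lam t $ i \<le> 1 - eps"

definition influential_path ::
  "(int \<Rightarrow> real^'n^'n) \<Rightarrow> (int \<Rightarrow> real^'n) \<Rightarrow> real \<Rightarrow> real \<Rightarrow> int \<Rightarrow> int
     \<Rightarrow> 'n \<Rightarrow> 'n \<Rightarrow> int \<Rightarrow> nat \<Rightarrow> bool" where
  "influential_path W lam eps w t0 td a i s m \<longleftrightarrow>
     (\<exists>p :: nat \<Rightarrow> 'n. p 0 = a \<and> p m = i \<and> 0 < m \<and>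
        eps_stubborn lam eps a s \<and> t0 \<le> s \<and> s + int m < td \<and>
        (\<forall>l\<in>{1..m}. w_edge W w (p (l - 1)) (p l) (s + int l)))"

definition DTG ::
  "(int \<Rightarrow> real^'n^'n) \<Rightarrow> (int \<Rightarrow> real^'n) \<Rightarrow> real \<Rightarrow> real \<Rightarrow> int \<Rightarrow> int \<Rightarrow> bool" where
  "DTG W lam eps w t0 td \<longleftrightarrow>
     (\<exists>k. t0 \<le> k \<and> k < td \<and>
        (\<forall>i. eps_stubborn lam eps i k \<or>
             (\<exists>a s m. influential_path W lam eps w t0 td a i s m \<and> s + int m = k)))"

end

theory Submission
  imports Defs
begin

lemma diag_mult_vec: "(diag_mat v *v x) $ i = v $ i * x $ i"
proof -
  have "(diag_mat v *v x) $ i = (\<Sum>j\<in>UNIV. (if i = j then v $ i * x $ j else 0))"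
    unfolding diag_mat_def matrix_vector_mult_def
    apply simp
    apply (subst sum.cong[OF refl, where h = "\<lambda>j. if i = j then v $ i * x $ j else 0"])
    by auto
  then show ?thesis by simp
qed

lemma mult_nn: "(\<And>i j. 0 \<le> (A::real^'n^'n) $ i $ j) \<Longrightarrow> (\<And>i j. 0 \<le> (B::real^'n^'n) $ i $ j)
   \<Longrightarrow> 0 \<le> (A ** B) $ i $ j"
  unfolding matrix_matrix_mult_def by (auto intro!: sum_nonneg mult_nonneg_nonneg)

definition U :: "(int \<Rightarrow> real^'n^'n) \<Rightarrow> (int \<Rightarrow> real^'n) \<Rightarrow> int \<Rightarrow> nat \<Rightarrow> real^'n" where
  "U W lam t0 n = Phi_steps W lam t0 n *v (\<chi> i. 1)"

lemma U_Suc: "U W lam t0 (Suc n) $ i =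
   lam (t0 + int n) $ i * (\<Sum>j\<in>UNIV. W (t0 + int n) $ i $ j * U W lam t0 n $ j)"
proof -
  have "U W lam t0 (Suc n) = diag_mat (lam (t0 + int n)) *v (W (t0 + int n) *v U W lam t0 n)"
    unfolding U_def by (simp add: matrix_vector_mul_assoc matrix_mul_assoc)
  then have "U W lam t0 (Suc n) $ i = lam (t0 + int n) $ i * (W (t0 + int n) *v U W lam t0 n) $ i"
    by (simp only: diag_mult_vec)
  then show ?thesis by (simp add: matrix_vector_mult_def)
qed

lemma U_0: "U W lam t0 0 $ i = 1"
proof -
  have "U W lam t0 0 $ i = (\<Sum>j\<in>UNIV. (if i = j then 1 else 0))"
    unfolding U_def matrix_vector_mult_def by (auto simp: mat_def intro!: sum.cong)
  then show ?thesis by simp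
qed

context
  fixes W :: "int \<Rightarrow> real^'n^'n" and lam :: "int \<Rightarrow> real^'n"
  assumes st: "tvfj_standing W lam"
begin

lemma Wnn: "0 \<le> W t $ i $ j" using st unfolding tvfj_standing_def row_stochastic_def by blast
lemma Wsum: "(\<Sum>j\<in>UNIV. W t $ i $ j) = 1" using st unfolding tvfj_standing_def row_stochastic_def by blast
lemma lam0: "0 \<le> lam t $ i" using st unfolding tvfj_standing_def by blast
lemma lam1: "lam t $ i \<le> 1" using st unfolding tvfj_standing_def by blast

lemma step_bound:
  assumes "\<And>j. 0 \<le> U W lam t0 n $ j" "\<And>j. U W lam t0 n $ j \<le> c"
  shows "U W lam t0 (Suc n) $ i \<le> c" "0 \<le> U W lam t0 (Suc n) $ i"
proof -
  let ?S = "\<Sum>j\<in>UNIV. W (t0 + int n) $ i $ j * U W lam t0 n $ j"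
  have S0: "0 \<le> ?S" by (intro sum_nonneg mult_nonneg_nonneg Wnn assms(1))
  have "?S \<le> (\<Sum>j\<in>UNIV. W (t0 + int n) $ i $ j * c)"
    by (intro sum_mono mult_left_mono Wnn assms(2))
  also have "\<dots> = c" by (simp add: sum_distrib_right[symmetric] Wsum)
  finally have Sc: "?S \<le> c" .
  have "lam (t0 + int n) $ i * ?S \<le> ?S"
    using S0 lam1 by (simp add: mult_left_le_one_le lam0)
  then show "U W lam t0 (Suc n) $ i \<le> c" using Sc by (simp add: U_Suc)
  show "0 \<le> U W lam t0 (Suc n) $ i" using S0 by (simp add: U_Suc lam0)
qed

lemma U_range: "0 \<le> U W lam t0 n $ i \<and> U W lam t0 n $ i \<le> 1"
proof (induction n arbitrary: i)
  case 0 then show ?case by (simp add: U_0)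
next
  case (Suc n) then show ?case using step_bound[of t0 n 1 i] by blast
qed

lemma persist:
  assumes "\<And>j. U W lam t0 n $ j \<le> c"
  shows "U W lam t0 (n + d) $ i \<le> c"
  using assms
proof (induction d arbitrary: i)
  case 0 then show ?case by simp
next
  case (Suc d) then show ?case using step_bound[of t0 "n+d" c i] U_range by simp
qed

lemma stub_step:
  assumes "lam (t0 + int n) $ a \<le> 1 - eps"
  shows "U W lam t0 (Suc n) $ a \<le> 1 - eps"
proof -
  let ?S = "\<Sum>j\<in>UNIV. W (t0 + int n) $ a $ j * U W lam t0 n $ j"
  have S0: "0 \<le> ?S" by (intro sum_nonneg mult_nonneg_nonneg Wnn) (use U_range in blast)
  have "?S \<le> (\<Sum>j\<in>UNIV. W (t0 + int n) $ a $ j * 1)"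
    by (intro sum_mono mult_left_mono Wnn) (use U_range in blast)
  also have "\<dots> = 1" by (simp add: Wsum)
  finally have "?S \<le> 1" .
  then have "lam (t0 + int n) $ a * ?S \<le> lam (t0 + int n) $ a"
    using S0 lam0 by (simp add: mult_left_le)
  then show ?thesis using assms by (simp add: U_Suc)
qed

lemma path_step:
  assumes "W (t0 + int n) $ i $ a \<ge> w" "U W lam t0 n $ a \<le> 1 - c" "c \<ge> 0" "w \<ge> 0"
  shows "U W lam t0 (Suc n) $ i \<le> 1 - w * c"
proof -
  let ?W = "W (t0 + int n)"
  let ?S = "\<Sum>j\<in>UNIV. ?W $ i $ j * U W lam t0 n $ j"
  have S0: "0 \<le> ?S" by (intro sum_nonneg mult_nonneg_nonneg Wnn) (use U_range in blast)
  have "?W $ i $ a * (1 - U W lam t0 n $ a) \<le> (\<Sum>j\<in>UNIV. ?W $ i $ j * (1 - U W lam t0 n $ j))"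
    by (rule member_le_sum[where f = "\<lambda>j. ?W $ i $ j * (1 - U W lam t0 n $ j)"])
       (use U_range Wnn in auto)
  moreover have "(\<Sum>j\<in>UNIV. ?W $ i $ j * (1 - U W lam t0 n $ j)) = 1 - ?S"
    by (simp add: algebra_simps sum_subtractf Wsum)
  moreover have "w * c \<le> ?W $ i $ a * (1 - U W lam t0 n $ a)"
    using assms by (intro mult_mono) auto
  ultimately have "?S \<le> 1 - w * c" by linarith
  moreover have "lam (t0 + int n) $ i * ?S \<le> ?S"
    using S0 lam1 by (simp add: mult_left_le_one_le lam0)
  ultimately show ?thesis by (simp add: U_Suc)
qed

lemma Phi_nn: "0 \<le> Phi_steps W lam t0 n $ i $ j"
proof (induction n arbitrary: i j)
  case 0 then show ?case by (simp add: mat_def)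
next
  case (Suc n)
  have "0 \<le> (diag_mat (lam (t0 + int n)) ** W (t0 + int n)) $ i $ k" for i k
    unfolding matrix_matrix_mult_def diag_mat_def
    by (auto intro!: sum_nonneg mult_nonneg_nonneg Wnn lam0)
  then show ?case using Suc by (simp add: mult_nn)
qed

end

theorem lemma1:
  fixes W :: "int \<Rightarrow> real^'n^'n" and lam :: "int \<Rightarrow> real^'n"
    and t0 td :: int and eps w :: real
  assumes "tvfj_standing W lam"
    and "t0 < td"
    and "eps > 0" and "w > 0" and "w \<le> 1"
    and "DTG W lam eps w t0 td"
  shows "mat_norm (Phi W lam td t0) \<le> 1 - eps * w ^ nat (td - t0)"
proof -
  note st = assms(1)
  define D where "D = nat (td - t0)"
  obtain k where k: "t0 \<le> k" "k < td"
    and cov: "\<And>i. eps_stubborn lam eps i k \<or>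
             (\<exists>a s m. influential_path W lam eps w t0 td a i s m \<and> s + int m = k)"
    using assms(6) unfolding DTG_def by blast
  define nk where "nk = nat (k - t0)"
  have kk: "k = t0 + int nk" using k unfolding nk_def by simp
  have nkD: "Suc nk \<le> D" using k unfolding nk_def D_def by simp
  have wD: "w ^ D \<le> w ^ m" if "m \<le> D" for m
    using that assms(4,5) by (simp add: power_decreasing)
  have epsD: "eps * w ^ D \<le> eps * w ^ m" if "m \<le> D" for m
    using wD[OF that] assms(3) by simp
  have bound: "U W lam t0 (Suc nk) $ i \<le> 1 - eps * w ^ D" for i
  proof -
    from cov[of i] show ?thesis
    proof
      assume "eps_stubborn lam eps i k"
      then have "U W lam t0 (Suc nk) $ i \<le> 1 - eps"
        using stub_step[OF st, of t0 nk i eps] kk unfolding eps_stubborn_def by simp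
      moreover have "eps * w ^ D \<le> eps * w ^ 0" by (rule epsD) simp
      ultimately show ?thesis by simp
    next
      assume "\<exists>a s m. influential_path W lam eps w t0 td a i s m \<and> s + int m = k"
      then obtain a s m p where sm: "s + int m = k" and p0: "p 0 = a" and pm: "p m = i"
        and m0: "0 < m" and stb: "eps_stubborn lam eps a s" and s0: "t0 \<le> s"
        and edges: "\<forall>l\<in>{1..m}. w_edge W w (p (l - 1)) (p l) (s + int l)"
        unfolding influential_path_def by blast
      define ns where "ns = nat (s - t0)"
      have ss: "s = t0 + int ns" using s0 unfolding ns_def by simp
      have claim: "l \<le> m \<Longrightarrow> U W lam t0 (ns + l + 1) $ p l \<le> 1 - eps * w ^ l" for l
      proof (induction l)
        case 0
        then show ?case using stub_step[OF st, of t0 ns a eps] stb p0 ss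
          unfolding eps_stubborn_def by simp
      next
        case (Suc l)
        have e: "w_edge W w (p l) (p (Suc l)) (s + int (Suc l))"
          using edges Suc.prems by force
        have t: "s + int (Suc l) = t0 + int (ns + l + 1)" using ss by simp
        have e': "w \<le> W (t0 + int (ns + l + 1)) $ p (Suc l) $ p l"
          using e unfolding w_edge_def t by simp
        have IH: "U W lam t0 (ns + l + 1) $ p l \<le> 1 - eps * w ^ l" using Suc by simp
        have "U W lam t0 (Suc (ns + l + 1)) $ p (Suc l) \<le> 1 - w * (eps * w ^ l)"
          by (rule path_step[OF st e' IH]) (use assms(3,4) in auto)
        then show ?case by (simp add: algebra_simps)
      qed
      have "ns + m = nk" using sm ss kk by simp
      then have "U W lam t0 (Suc nk) $ i \<le> 1 - eps * w ^ m"
        using claim[of m] pm by simp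
      moreover have "m \<le> D" using sm s0 k nkD \<open>ns + m = nk\<close> by simp
      ultimately show ?thesis using epsD by fastforce
    qed
  qed
  have fin: "U W lam t0 D $ i \<le> 1 - eps * w ^ D" for i
    using persist[OF st, of t0 "Suc nk" _ "D - Suc nk" i] bound nkD by simp
  have PD: "Phi W lam td t0 = Phi_steps W lam t0 D" unfolding Phi_def D_def by simp
  have row: "(\<Sum>j\<in>UNIV. \<bar>Phi W lam td t0 $ i $ j\<bar>) = U W lam t0 D $ i" for i
    unfolding PD U_def matrix_vector_mult_def using Phi_nn[OF st] by simp
  show ?thesis unfolding mat_norm_def D_def[symmetric]
    using fin row by (subst Max_le_iff) auto
qed

end
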